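(* Let $0<q<1$. The kernel $K(\mu,n)=(q^{\mu};q)_n$ is strictly totally positive of order $3$ on $(0,\infty)\times\mathbb{N}_0$, i.e. for $m=1,2,3$, all reals $0<\mu_1<\dots<\mu_m$ and all integers $0\le n_1<\dots<n_m$, $\det\big((q^{\mu_i};q)_{n_j}\big)_{i,j=1}^m>0$.
   Context: $(a;q)_n=\prod_{j=0}^{n-1}(1-aq^j)$, with $(a;q)_0=1$. *)

theory Defs
  imports "HOL-Analysis.Analysis" "Jordan_Normal_Form.Determinant"
begin

definition qpoch :: "real \<Rightarrow> real \<Rightarrow> nat \<Rightarrow> real" where
  "qpoch a q n = (\<Prod>j<n. 1 - a * q ^ j)"

end

theory Submission
  imports Defs
begin

lemma det1: "det (mat 1 1 f) = f (0,0)"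
  by (subst det_single[of _]) auto

lemma det2: "det (mat 2 2 f) = f (0,0) * f (1,1) - f (0,1) * f (1,0)"
  apply (subst laplace_expansion_column[of _ 2 0]) 
  apply (auto simp: cofactor_def mat_delete_def lessThan_Suc numeral_2_eq_2 det_single)
  done

lemma det2': "det (mat (Suc (Suc 0)) (Suc (Suc 0)) f) = f (0,0) * f (1,1) - f (0,1) * f (1,0)"
  using det2[of f] by (simp add: numeral_2_eq_2)

lemma det3: "det (mat 3 3 f) = f (0,0) * (f (1,1) * f (2,2) - f (1,2) * f (2,1))
   - f (1,0) * (f (0,1) * f (2,2) - f (0,2) * f (2,1)) + f (2,0) * (f (0,1) * f (1,2) - f (0,2) * f (1,1))"
  apply (subst laplace_expansion_column[of _ 3 0]) 
  apply (auto simp: cofactor_def lessThan_Suc numeral_3_eq_3 mat_delete_def)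
  apply (simp add: det2' numeral_2_eq_2)
  done

definition d2 :: "(nat \<Rightarrow> nat \<Rightarrow> real) \<Rightarrow> nat \<Rightarrow> nat \<Rightarrow> real" where
  "d2 C a b = C 0 a * C 1 b - C 0 b * C 1 a"
definition d3 :: "(nat \<Rightarrow> nat \<Rightarrow> real) \<Rightarrow> nat \<Rightarrow> nat \<Rightarrow> nat \<Rightarrow> real" where
  "d3 C a b c = C 0 a * (C 1 b * C 2 c - C 1 c * C 2 b) - C 1 a * (C 0 b * C 2 c - C 0 c * C 2 b) + C 2 a * (C 0 b * C 1 c - C 0 c * C 1 b)"

lemma pl1: "d3 C a b d * d2 C b c = d3 C a b c * d2 C b d + d2 C a b * d3 C b c d"
  unfolding d2_def d3_def by (simp add: algebra_simps)
lemma pl2: "d3 C a c d * d2 C b c = d3 C a b c * d2 C c d + d2 C a c * d3 C b c d"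
  unfolding d2_def d3_def by (simp add: algebra_simps)

lemma qpoch_Suc: "qpoch x q (Suc n) = qpoch x q n * (1 - x * q ^ n)"
  by (simp add: qpoch_def)

lemma xq_lt1: fixes q x :: real assumes "0 < q" "q < 1" "0 < x" "x < 1" shows "x * q ^ n < 1"
proof -
  have "q ^ n \<le> 1 ^ n" by (rule power_mono) (use assms in auto)
  hence "x * q ^ n \<le> x * 1" using mult_left_mono[of "q^n" 1 x] assms by simp
  thus ?thesis using assms by linarith
qed

lemma poly3: fixes K0 K1 K2 y0 y1 y2 q :: real shows
  "K0 * (K1 * (1 - y1) * (K2 * (1 - y2) * (1 - q * y2)) - K1 * (1 - y1) * (1 - q * y1) * (K2 * (1 - y2))) -
   K1 * (K0 * (1 - y0) * (K2 * (1 - y2) * (1 - q * y2)) - K0 * (1 - y0) * (1 - q * y0) * (K2 * (1 - y2))) +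
   K2 * (K0 * (1 - y0) * (K1 * (1 - y1) * (1 - q * y1)) - K0 * (1 - y0) * (1 - q * y0) * (K1 * (1 - y1)))
   = K0 * K1 * K2 * q * ((y0 - y1) * (y0 - y2) * (y1 - y2))"
  by (simp add: algebra_simps)

lemma qpoch_pos: assumes "0 < q" "q < 1" "0 < x" "x < 1" shows "qpoch x q n > 0"
proof (induction n)
  case 0 then show ?case by (simp add: qpoch_def)
next
  case (Suc n)
  have "x * q ^ n < 1" by (rule xq_lt1[OF assms])
  then show ?case using Suc by (simp add: qpoch_Suc)
qed

lemma qpoch_add: "qpoch x q (a + b) = qpoch x q a * qpoch (x * q ^ a) q b"
proof (induction b)
  case 0 then show ?case by (simp add: qpoch_def)
next
  case (Suc b)
  then show ?case by (simp add: qpoch_Suc power_add mult_ac)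
qed

lemma qpoch_anti: assumes "0 < q" "q < 1" "0 < y" "y < x" "x < 1" "c \<ge> 1"
  shows "qpoch x q c < qpoch y q c"
  using assms(6)
proof (induction c rule: dec_induct)
  case base then show ?case using assms by (simp add: qpoch_def)
next
  case (step c)
  have qc: "0 < q ^ c" using assms by simp
  have "y * q ^ c < x * q ^ c" using assms qc by simp
  hence "1 - x * q ^ c < 1 - y * q ^ c" by simp
  moreover have "0 < 1 - x * q ^ c" using xq_lt1[of q x c] assms by simp
  moreover have "0 < qpoch y q c" using qpoch_pos[OF assms(1,2,3)] assms(4,5) by simp
  ultimately have "qpoch x q c * (1 - x * q ^ c) < qpoch y q c * (1 - y * q ^ c)"
    using step.IH by (intro mult_strict_mono) auto
  then show ?case by (simp add: qpoch_Suc)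
qed

lemma stp2: assumes "0 < q" "q < 1" "0 < y" "y < x" "x < 1" "a < b"
  shows "qpoch x q a * qpoch y q b - qpoch x q b * qpoch y q a > 0"
proof -
  obtain c where b: "b = a + c" and c: "c \<ge> 1" using assms(6)
    by (intro that[of "b - a"]) auto
  have qa: "0 < q ^ a" using assms by simp
  have h1: "y * q ^ a < x * q ^ a" using assms qa by simp
  have h2: "x * q ^ a < 1" using assms xq_lt1[of q x a] by simp
  have h3: "0 < y * q ^ a" using assms qa by simp
  have "qpoch (x * q ^ a) q c < qpoch (y * q ^ a) q c"
    by (rule qpoch_anti[OF assms(1,2) h3 h1 h2 c])
  moreover have "0 < qpoch x q a" "0 < qpoch y q a" using qpoch_pos[OF assms(1,2)] assms by auto
  hence "0 < qpoch x q a * qpoch y q a" by simp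
  ultimately have "0 < qpoch x q a * qpoch y q a * (qpoch (y * q ^ a) q c - qpoch (x * q ^ a) q c)"
    by simp
  also have "\<dots> = qpoch x q a * qpoch y q b - qpoch x q b * qpoch y q a"
    unfolding b qpoch_add by (simp add: algebra_simps)
  finally show ?thesis .
qed

lemma stp3_consec:
  fixes x :: "nat \<Rightarrow> real"
  assumes "0 < q" "q < 1" "0 < x 2" "x 2 < x 1" "x 1 < x 0" "x 0 < 1"
  shows "d3 (\<lambda>i k. qpoch (x i) q k) n (Suc n) (Suc (Suc n)) > 0"
proof -
  define K where "K i = qpoch (x i) q n" for i
  define y where "y i = x i * q ^ n" for i
  have qn: "0 < q ^ n" using assms by simp
  have x1: "x 1 < 1" "x 2 < 1" using assms by auto
  have K: "0 < K 0" "0 < K 1" "0 < K 2"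
    unfolding K_def using assms x1 qpoch_pos[OF assms(1,2)] by auto
  have y: "y 2 < y 1" "y 1 < y 0" using assms qn by (auto simp: y_def)
  have c1: "qpoch (x i) q (Suc n) = K i * (1 - y i)" for i
    by (simp add: qpoch_Suc K_def y_def)
  have c2: "qpoch (x i) q (Suc (Suc n)) = K i * (1 - y i) * (1 - q * y i)" for i
    by (simp add: qpoch_Suc K_def y_def mult_ac)
  have e: "d3 (\<lambda>i k. qpoch (x i) q k) n (Suc n) (Suc (Suc n)) =
     K 0 * K 1 * K 2 * q * ((y 0 - y 1) * (y 0 - y 2) * (y 1 - y 2))"
    unfolding d3_def c1 c2 K_def[symmetric] by (rule poly3)
  have "0 < K 0 * K 1 * K 2 * q" using K assms by simp
  moreover have "0 < (y 0 - y 1) * (y 0 - y 2) * (y 1 - y 2)" using y by simp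
  ultimately show ?thesis unfolding e by simp
qed

lemma fekete:
  assumes d2pos: "\<And>a b. a < b \<Longrightarrow> d2 C a b > 0"
    and base: "\<And>k. d3 C k (Suc k) (Suc (Suc k)) > 0"
  shows "i < j \<Longrightarrow> j < l \<Longrightarrow> d3 C i j l > 0"
proof (induction "l - i" arbitrary: i j l rule: less_induct)
  case less
  show ?case
  proof (cases "l = Suc j \<and> j = Suc i")
    case True then show ?thesis using base[of i] by simp
  next
    case False
    show ?thesis
    proof (cases "Suc j < l")
      case True
      have h1: "d3 C i j (Suc j) > 0" by (rule less.hyps) (use less.prems True in auto)
      have h2: "d3 C j (Suc j) l > 0" by (rule less.hyps) (use less.prems True in auto)
      have "d3 C i j l * d2 C j (Suc j) = d3 C i j (Suc j) * d2 C j l + d2 C i j * d3 C j (Suc j) l"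
        by (rule pl1)
      also have "\<dots> > 0" using h1 h2 d2pos[of j l] d2pos[of i j] less.prems True by (simp add: add_pos_pos)
      finally show ?thesis using d2pos[of j "Suc j"] by (simp add: zero_less_mult_iff)
    next
      case False2: False
      hence l: "l = Suc j" using less.prems by simp
      hence ij: "Suc i < j" using False less.prems by simp
      have h1: "d3 C i (Suc i) j > 0" by (rule less.hyps) (use less.prems ij l in auto)
      have h2: "d3 C (Suc i) j l > 0" by (rule less.hyps) (use less.prems ij l in auto)
      have "d3 C i j l * d2 C (Suc i) j = d3 C i (Suc i) j * d2 C j l + d2 C i j * d3 C (Suc i) j l"
        by (rule pl2)
      also have "\<dots> > 0" using h1 h2 d2pos[of j l] d2pos[of i j] less.prems ij by (simp add: add_pos_pos)
      finally show ?thesis using d2pos[of "Suc i" j] ij by (simp add: zero_less_mult_iff)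
    qed
  qed
qed

theorem lemma3:
  fixes q :: real and m :: nat and \<mu> :: "nat \<Rightarrow> real" and n :: "nat \<Rightarrow> nat"
  assumes "0 < q" "q < 1"
    and "m \<in> {1, 2, 3}"
    and "0 < \<mu> 0"
    and "\<And>i. i + 1 < m \<Longrightarrow> \<mu> i < \<mu> (i + 1)"
    and "\<And>j. j + 1 < m \<Longrightarrow> n j < n (j + 1)"
  shows "det (mat m m (\<lambda>(i, j). qpoch (q powr \<mu> i) q (n j))) > 0"
proof -
  define x where "x i = q powr \<mu> i" for i
  define C where "C i k = qpoch (x i) q k" for i k
  have xpos: "0 < x i" for i unfolding x_def using assms by simp
  have x0: "x 0 < 1" unfolding x_def using powr_less_mono'[of q 0 "\<mu> 0"] assms by simp
  have xdec: "x (Suc i) < x i" if "i + 1 < m" for i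
    unfolding x_def using powr_less_mono'[of q "\<mu> i" "\<mu> (i+1)"] assms(1,2) assms(5)[OF that] by simp
  have f: "(\<lambda>(i, j). qpoch (q powr \<mu> i) q (n j)) = (\<lambda>(i, j). C i (n j))"
    unfolding C_def x_def by simp
  consider "m = 1" | "m = 2" | "m = 3" using assms(3) by auto
  then show ?thesis
  proof cases
    case 1
    then show ?thesis unfolding f 1 det1 using qpoch_pos[OF assms(1,2) xpos x0]
      by (simp add: C_def)
  next
    case 2
    have "x 1 < x 0" using xdec[of 0] 2 by simp
    hence "d2 C (n 0) (n 1) > 0" unfolding d2_def C_def
      using stp2[OF assms(1,2) xpos] x0 assms(6)[of 0] 2 by simp
    then show ?thesis unfolding f 2 det2 d2_def by simp
  next
    case 3
    have x10: "x 1 < x 0" using xdec[of 0] 3 by simp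
    have x21: "x 2 < x 1" using xdec[of 1] 3 by (simp add: numeral_2_eq_2)
    have "d3 C (n 0) (n 1) (n 2) > 0"
    proof (rule fekete)
      fix a b :: nat assume "a < b"
      thus "d2 C a b > 0" unfolding d2_def C_def
        using stp2[OF assms(1,2) xpos] x0 x10 by simp
    next
      fix k show "d3 C k (Suc k) (Suc (Suc k)) > 0"
        unfolding C_def using stp3_consec[OF assms(1,2) xpos x21 x10 x0] by simp
    next
      show "n 0 < n 1" using assms(6)[of 0] 3 by simp
      show "n 1 < n 2" using assms(6)[of 1] 3 by (simp add: numeral_2_eq_2)
    qed
    then show ?thesis unfolding f 3 det3 d3_def by simp
  qed
qed

end
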